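(* Let $0<\delta<1/1000$, let $x$ be large, let $D=x^{7/12-50\delta}$, let $x^{2\delta} \le N\le x^{1/3+\delta/2}$ and let $d\in\mathcal{D}^+(D)$. Then there is a factorization $d=d_1d_2d_3$ into positive integers such that \begin{align*} d_1&\le\frac{N}{x^\delta},\\ N^2d_2d_3^2&\le x^{1-\delta},\\ N^2d_1d_2^4d_3^3&\le x^{2-\delta},\\ N d_1d_2^5d_3^2&\le x^{2-\delta}. \end{align*}
   Context: For $D\ge 1$, the support set of the upper bound linear sieve weights of level $D$ is \[ \mathcal{D}^+(D):=\Bigl\{p_1\cdots p_r:\ p_1\ge p_2\ge \dots \ge p_r \text{ primes},\ \ p_1\cdots p_{2j}\,p_{2j+1}^3\le D\ \text{ for all } 0\le j<r/2\Bigr\} \] (with $r\ge 0$, the empty product being $1$). *)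

theory Defs
  imports "HOL-Computational_Algebra.Primes" Complex_Main
begin

text \<open>Support set of the upper bound linear sieve weights of level D:
  products p_1 ... p_r of primes p_1 >= ... >= p_r (list ps = [p_1,...,p_r])
  with p_1 ... p_{2j} p_{2j+1}^3 <= D for all 0 <= j < r/2.
  In 0-based list indexing, p_{2j+1} = ps ! (2*j), and the condition 2j < r.\<close>
definition upper_sieve_support :: "real \<Rightarrow> nat set" where
  "upper_sieve_support D = {d. \<exists>ps :: nat list.
      (\<forall>p\<in>set ps. prime p) \<and> sorted_wrt (\<ge>) ps \<and> d = prod_list ps \<and>
      (\<forall>j. 2 * j < length ps \<longrightarrow>
          real (prod_list (take (2 * j) ps)) * real (ps ! (2 * j)) ^ 3 \<le> D)}"

end

theory Submission
  imports Defs
begin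

lemma fill_lemma:
  fixes f :: "nat \<Rightarrow> real"
  assumes "finite S"
  shows "(\<forall>i\<in>S. 0 \<le> f i \<and> f i \<le> h) \<Longrightarrow> b \<le> R \<Longrightarrow> L + h \<le> R \<Longrightarrow> L \<le> b + sum f S
    \<Longrightarrow> \<exists>S'\<subseteq>S. L \<le> b + sum f S' \<and> b + sum f S' \<le> R"
  using assms
proof (induction S rule: finite_induct)
  case empty
  then show ?case by auto
next
  case (insert a S)
  show ?case
  proof (cases "L \<le> b + sum f S")
    case True
    with insert obtain S' where "S' \<subseteq> S" "L \<le> b + sum f S'" "b + sum f S' \<le> R" by auto
    then show ?thesis by blast
  next
    case False
    have "sum f (insert a S) = f a + sum f S" using insert by simp
    moreover have "f a \<le> h" using insert by auto
    ultimately show ?thesis using insert False by (intro exI[of _ "insert a S"]) auto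
  qed
qed

lemma greedy_lemma:
  fixes e :: "nat \<Rightarrow> real" and U \<theta> :: real
  assumes two: "\<And>m. m < r \<Longrightarrow> (\<Sum>i<m. e i) + 2 * e m \<le> \<theta>"
    and U: "0 \<le> U" and U2: "U \<le> \<theta>"
  shows "m \<le> r \<Longrightarrow> \<exists>A\<subseteq>{..<m}. sum e A \<le> U \<and> sum e ({..<m} - A) \<le> \<theta> - U \<and>
     (\<forall>i\<in>{..<m} - A. sum e (A \<inter> {..<i}) + e i > U)"
proof (induction m)
  case 0
  show ?case using U U2 by auto
next
  case (Suc m)
  then obtain A where A: "A\<subseteq>{..<m}" "sum e A \<le> U" "sum e ({..<m} - A) \<le> \<theta> - U"
     "\<forall>i\<in>{..<m} - A. sum e (A \<inter> {..<i}) + e i > U" by auto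
  have fin: "finite A" using A(1) finite_subset by blast
  have mA: "m \<notin> A" using A(1) by auto
  have split: "sum e {..<m} = sum e A + sum e ({..<m} - A)"
    using A(1) by (metis add.commute finite_lessThan sum.subset_diff)
  show ?case
  proof (cases "sum e A + e m \<le> U")
    case True
    have s1: "sum e (insert m A) = e m + sum e A" using fin mA by simp
    have d: "{..<Suc m} - insert m A = {..<m} - A" by auto
    have "\<forall>i\<in>{..<Suc m} - insert m A. sum e (insert m A \<inter> {..<i}) + e i > U"
    proof
      fix i assume "i \<in> {..<Suc m} - insert m A"
      then have i: "i \<in> {..<m} - A" by auto
      then have "insert m A \<inter> {..<i} = A \<inter> {..<i}" by auto
      then show "sum e (insert m A \<inter> {..<i}) + e i > U" using A(4) i by simp
    qed
    moreover have "insert m A \<subseteq> {..<Suc m}" using A(1) by auto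
    moreover have "sum e (insert m A) \<le> U" using True s1 by simp
    moreover have "sum e ({..<Suc m} - insert m A) \<le> \<theta> - U" using d A(3) by simp
    ultimately show ?thesis by blast
  next
    case False
    have d: "{..<Suc m} - A = insert m ({..<m} - A)" using A(1) by auto
    have s2: "sum e ({..<Suc m} - A) = e m + sum e ({..<m} - A)" unfolding d by simp
    have "(\<Sum>i<m. e i) + 2 * e m \<le> \<theta>" using two Suc by simp
    then have v: "sum e ({..<Suc m} - A) \<le> \<theta> - U" using s2 split False by linarith
    have "\<forall>i\<in>{..<Suc m} - A. sum e (A \<inter> {..<i}) + e i > U"
    proof
      fix i assume i: "i \<in> {..<Suc m} - A"
      show "sum e (A \<inter> {..<i}) + e i > U"
      proof (cases "i = m")
        case True
        have "A \<inter> {..<i} = A" using A(1) True by auto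
        then show ?thesis using False True by simp
      next
        case False
        then show ?thesis using i A(4) by auto
      qed
    qed
    then show ?thesis using A v by (intro exI[of _ A]) auto
  qed
qed

lemma core:
  fixes \<delta> n :: real and e :: "nat \<Rightarrow> real" and r :: nat
  assumes d1: "0 < \<delta>" and d2: "\<delta> < 1/1000"
    and n1: "2*\<delta> \<le> n" and n2: "n \<le> 1/3 + \<delta>/2"
    and nonneg: "\<forall>i<r. 0 \<le> e i"
    and sorted: "\<forall>i j. i \<le> j \<longrightarrow> j < r \<longrightarrow> e j \<le> e i"
    and cond: "\<forall>j. 2*j < r \<longrightarrow> (\<Sum>i<2*j. e i) + 3 * e (2*j) \<le> 7/12 - 50*\<delta>"
  shows "\<exists>A B. A \<subseteq> {..<r} \<and> B \<subseteq> {..<r} - A \<and> sum e A \<le> n - \<delta> \<and>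
     2*n + sum e B + 2 * sum e ({..<r} - A - B) \<le> 1 - \<delta> \<and>
     2*n + sum e A + 4*sum e B + 3*sum e ({..<r} - A - B) \<le> 2 - \<delta> \<and>
     n + sum e A + 5*sum e B + 2*sum e ({..<r} - A - B) \<le> 2 - \<delta>"
proof -
  define \<theta> where "\<theta> = 7/12 - 50*\<delta>"
  have cond': "\<And>j. 2*j < r \<Longrightarrow> (\<Sum>i<2*j. e i) + 3 * e (2*j) \<le> \<theta>"
    using cond \<theta>_def by auto
  have two: "(\<Sum>i<m. e i) + 2 * e m \<le> \<theta>" if m: "m < r" for m
  proof -
    have "m = 2*(m div 2) \<or> m = 2*(m div 2) + 1" by presburger
    then show ?thesis
    proof
      assume h: "m = 2*(m div 2)"
      define j where "j = m div 2"
      have hj: "m = 2*j" using h j_def by simp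
      have "(\<Sum>i<2*j. e i) + 3 * e (2*j) \<le> \<theta>" using cond' m hj by simp
      then have "(\<Sum>i<m. e i) + 3 * e m \<le> \<theta>" using hj by simp
      moreover have "0 \<le> e m" using nonneg m by simp
      ultimately show ?thesis by linarith
    next
      assume h: "m = 2*(m div 2) + 1"
      define j where "j = m div 2"
      have a: "(\<Sum>i<2*j. e i) + 3 * e (2*j) \<le> \<theta>" using cond' m h j_def by simp
      have hj: "m = Suc (2*j)" using h j_def by simp
      have b: "(\<Sum>i<m. e i) = (\<Sum>i<2*j. e i) + e (2*j)" unfolding hj by simp
      have c: "e m \<le> e (2*j)" using sorted m h j_def by simp
      show ?thesis using a b c by linarith
    qed
  qed
  have s_le: "sum e {..<r} \<le> \<theta>"
  proof (cases r)
    case 0 then show ?thesis using \<theta>_def d2 by simp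
  next
    case (Suc k)
    have "(\<Sum>i<k. e i) + 2 * e k \<le> \<theta>" using two Suc by simp
    moreover have "0 \<le> e k" using nonneg Suc by simp
    ultimately show ?thesis using Suc by simp
  qed
  have e_le: "e i \<le> \<theta>/3" if "i < r" for i
  proof -
    have "e i \<le> e 0" using sorted that by simp
    moreover have "3 * e 0 \<le> \<theta>" using cond'[of 0] that by simp
    ultimately show ?thesis by simp
  qed
  obtain A where A: "A \<subseteq> {..<r}" "sum e A \<le> n - \<delta>" "sum e ({..<r} - A) \<le> \<theta> - (n - \<delta>)"
     "\<forall>i\<in>{..<r} - A. sum e (A \<inter> {..<i}) + e i > n - \<delta>"
    using greedy_lemma[of r e \<theta> "n - \<delta>" r] two n1 n2 d1 d2 \<theta>_def by auto
  define W where "W = {..<r} - A"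
  define t where "t = sum e W"
  define a1 where "a1 = sum e A"
  have finA: "finite A" using A(1) finite_subset by blast
  have sumr: "sum e {..<r} = a1 + t" unfolding a1_def t_def W_def
    using A(1) by (metis add.commute finite_lessThan sum.subset_diff)
  have a1nn: "0 \<le> a1" unfolding a1_def using A(1) nonneg by (intro sum_nonneg) auto
  have tV: "t \<le> \<theta> - (n - \<delta>)" using A(3) t_def W_def by simp
  define L where "L = 2*t + 2*n - 1 + \<delta>"
  define R where "R = min (2 - \<delta> - 2*n - a1 - 3*t) ((2 - \<delta> - n - a1 - 2*t)/3)"
  have R14: "1/4 \<le> R" unfolding R_def using sumr s_le tV \<theta>_def d1 by auto
  have L16: "L \<le> 1/6" unfolding L_def using tV \<theta>_def d1 by auto
  have LR: "L + 1/12 \<le> R" unfolding R_def L_def using sumr s_le tV \<theta>_def d1 by auto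
  have Lt: "L \<le> t" unfolding L_def using tV \<theta>_def d1 n2 by auto
  have key: "\<exists>B\<subseteq>W. L \<le> sum e B \<and> sum e B \<le> R"
  proof (cases "t \<le> R")
    case True
    then show ?thesis using Lt t_def by blast
  next
    case False
    have finW: "finite W" unfolding W_def by simp
    have Wr: "W \<subseteq> {..<r}" unfolding W_def by auto
    define Bg where "Bg = {i\<in>W. e i > 1/12}"
    define Sm where "Sm = W - Bg"
    have finBg: "finite Bg" unfolding Bg_def using finW by simp
    have finSm: "finite Sm" unfolding Sm_def using finW by simp
    have tsplit: "t = sum e Bg + sum e Sm" unfolding t_def Sm_def
      using finW Bg_def by (metis (no_types, lifting) add.commute mem_Collect_eq subsetI sum.subset_diff)
    have Smp: "\<forall>i\<in>Sm. 0 \<le> e i \<and> e i \<le> 1/12" unfolding Sm_def Bg_def using Wr nonneg by auto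
    have signm: "0 \<le> sum e Sm" using Smp by (intro sum_nonneg) auto
    show ?thesis
    proof (cases "Bg = {}")
      case True
      then have "Sm = W" unfolding Sm_def by simp
      then obtain S' where "S' \<subseteq> W" "L \<le> 0 + sum e S'" "0 + sum e S' \<le> R"
        using fill_lemma[of Sm e "1/12" 0 R L] finSm Smp R14 LR Lt t_def by auto
      then show ?thesis by auto
    next
      case False
      define i1 where "i1 = Min Bg"
      have i1: "i1 \<in> Bg" "\<And>i. i \<in> Bg \<Longrightarrow> i1 \<le> i" unfolding i1_def using Min_in[OF _ False] Min_le[of "Bg"] finBg by auto
      have i1r: "i1 < r" "e i1 > 1/12" "i1 \<in> W" using i1 Wr Bg_def by auto
      show ?thesis
      proof (cases "L \<le> e i1 + sum e Sm")
        case True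
        have "e i1 \<le> R" using e_le[OF i1r(1)] \<theta>_def R14 d1 by linarith
        then obtain S' where S': "S' \<subseteq> Sm" "L \<le> e i1 + sum e S'" "e i1 + sum e S' \<le> R"
          using fill_lemma[of Sm e "1/12" "e i1" R L] finSm Smp LR True by auto
        have "i1 \<notin> S'" using S'(1) i1(1) Sm_def by auto
        moreover have "finite S'" using S'(1) finSm finite_subset by blast
        ultimately have "sum e (insert i1 S') = e i1 + sum e S'" by simp
        moreover have "insert i1 S' \<subseteq> W" using S'(1) i1r Sm_def by auto
        ultimately show ?thesis using S' by (metis (no_types, lifting))
      next
        case False2: False
        have ne: "Bg - {i1} \<noteq> {}"
        proof
          assume "Bg - {i1} = {}"
          then have "Bg = {i1}" using i1 by auto
          then show False using tsplit False2 Lt by simp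
        qed
        define i2 where "i2 = Min (Bg - {i1})"
        have i2: "i2 \<in> Bg - {i1}" "\<And>i. i \<in> Bg - {i1} \<Longrightarrow> i2 \<le> i" unfolding i2_def using Min_in[OF _ ne] Min_le[of "Bg - {i1}"] finBg by auto
        have i2b: "i2 \<in> Bg" "i2 \<noteq> i1" using i2(1) by auto
        have i2r: "i2 < r" "e i2 > 1/12" "i2 \<in> W" "i1 < i2"
        proof -
          show "i2 \<in> W" "e i2 > 1/12" using i2b Bg_def by auto
          then show "i2 < r" using Wr by auto
          show "i1 < i2" using i1(2)[OF i2b(1)] i2b(2) by simp
        qed
        show ?thesis
        proof (cases "e i1 + e i2 \<le> R")
          case True
          have s12: "sum e {i1, i2} = e i1 + e i2" using i2r by simp
          have "{i1,i2} \<subseteq> W" using i1r i2r by auto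
          moreover have "L \<le> sum e {i1, i2}" using s12 L16 i1r i2r by linarith
          moreover have "sum e {i1, i2} \<le> R" using s12 True by linarith
          ultimately show ?thesis by blast
        next
          case False3: False
          have i1o: "e i1 \<ge> e i2" using sorted i2r by simp
          show ?thesis
          proof (cases "Bg - {i1, i2} = {}")
            case False4: False
            define i3 where "i3 = Min (Bg - {i1,i2})"
            have i3: "i3 \<in> Bg - {i1,i2}" "\<And>i. i \<in> Bg - {i1,i2} \<Longrightarrow> i3 \<le> i" unfolding i3_def using Min_in[OF _ False4] Min_le[of "Bg - {i1,i2}"] finBg by auto
            have i3b: "i3 \<in> Bg - {i1}" "i3 \<noteq> i2" using i3(1) by auto
            have i3r: "i3 < r" "e i3 > 1/12" "i3 \<in> W" "i2 < i3"
            proof -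
              show "i3 \<in> W" "e i3 > 1/12" using i3b Bg_def by auto
              then show "i3 < r" using Wr by auto
              show "i2 < i3" using i2(2)[OF i3b(1)] i3b(2) by simp
            qed
            show ?thesis
            proof (cases "e i2 + e i3 \<le> R")
              case True
              have s23: "sum e {i2, i3} = e i2 + e i3" using i3r by simp
              have "{i2,i3} \<subseteq> W" using i3r i2r by auto
              moreover have "L \<le> sum e {i2, i3}" using s23 L16 i2r i3r by linarith
              moreover have "sum e {i2, i3} \<le> R" using s23 True by linarith
              ultimately show ?thesis by blast
            next
              case False
              have r3: "2 < r" using i3r i2r by linarith
              have "(\<Sum>i<2*1. e i) + 3 * e (2*1) \<le> \<theta>" using cond'[of 1] r3 by simp
              then have c1: "e 0 + e 1 + 3 * e 2 \<le> \<theta>" by (simp add: eval_nat_numeral)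
              have "e 1 \<le> e 0" using sorted r3 by simp
              moreover have "e i2 \<le> e 1" using sorted i2r by simp
              moreover have "e i3 \<le> e 2" using sorted i3r i2r by simp
              ultimately show ?thesis using c1 False R14 i3r \<theta>_def d1 by linarith
            qed
          next
            case True
            then have Bg2: "Bg = {i1, i2}" using i1 i2 by auto
            have tt: "t = e i1 + e i2 + sum e Sm" using tsplit Bg2 i2r by simp
            have gr: "sum e (A \<inter> {..<i1}) + e i1 > n - \<delta>" using A(4) i1r W_def by auto
            have big: "e i1 > 1/8" using False3 R14 i1o by linarith
            have i1lt: "i1 < 2"
            proof (rule ccontr)
              assume "\<not> i1 < 2"
              then have r3: "2 < r" and le2: "e i1 \<le> e 2" using i1r sorted by auto
              have "(\<Sum>i<2*1. e i) + 3 * e (2*1) \<le> \<theta>" using cond'[of 1] r3 by simp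
              then have c1: "e 0 + e 1 + 3 * e 2 \<le> \<theta>" by (simp add: eval_nat_numeral)
              have "e 1 \<le> e 0" "e 2 \<le> e 1" using sorted r3 by auto
              then show False using c1 le2 big \<theta>_def d1 by linarith
            qed
            show ?thesis
            proof (cases "i1 = 0")
              case True
              then have "e 0 > n - \<delta>" using gr by simp
              then show ?thesis using True False2 tt tV L_def \<theta>_def i1o signm d1 by simp
            next
              case False
              then have i11: "i1 = 1" using i1lt by simp
              have "A \<inter> {..<i1} \<subseteq> {0}" using i11 by auto
              then have "sum e (A \<inter> {..<i1}) \<le> sum e {0}"
                using nonneg i1r by (intro sum_mono2) auto
              then have g1: "e 0 + e 1 > n - \<delta>" using gr i11 by simp
              have r3: "2 < r" using i2r i11 by linarith
              have "(\<Sum>i<2*1. e i) + 3 * e (2*1) \<le> \<theta>" using cond'[of 1] r3 by simp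
              then have c1: "e 0 + e 1 + 3 * e 2 \<le> \<theta>" by (simp add: eval_nat_numeral)
              have "e i2 \<le> e 2" using sorted i2r i11 by simp
              then show ?thesis using c1 g1 False2 tt tV L_def \<theta>_def i2r signm d1 by linarith
            qed
          qed
        qed
      qed
    qed
  qed
  then obtain B where B: "B \<subseteq> W" "L \<le> sum e B" "sum e B \<le> R" by blast
  have finW: "finite W" unfolding W_def by simp
  have sC: "sum e ({..<r} - A - B) = t - sum e B"
    unfolding t_def using B(1) finW W_def by (metis sum_diff)
  show ?thesis
    apply (rule exI[of _ A], rule exI[of _ B])
    using A(1,2) B sC W_def L_def R_def a1_def by (auto simp: min_def split: if_splits)
qed


lemma powr_log_eq: "1 < (x::real) \<Longrightarrow> 0 < y \<Longrightarrow> x powr (ln y / ln x) = y"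
  by (simp add: powr_def)

lemma prod_list_take_real:
  "k \<le> length ps \<Longrightarrow> real (prod_list (take k ps)) = (\<Prod>i<k. real (ps ! i))"
proof (induction k)
  case 0 then show ?case by simp
next
  case (Suc k)
  then have "take (Suc k) ps = take k ps @ [ps ! k]" by (simp add: take_Suc_conv_app_nth)
  then show ?case using Suc by simp
qed

theorem proposition9p1:
  fixes \<delta> :: real
  assumes "0 < \<delta>" and "\<delta> < 1/1000"
  shows "\<exists>x0. \<forall>x N :: real. \<forall>d :: nat.
    x \<ge> x0 \<longrightarrow> x powr (2*\<delta>) \<le> N \<longrightarrow> N \<le> x powr (1/3 + \<delta>/2) \<longrightarrow>
    d \<in> upper_sieve_support (x powr (7/12 - 50*\<delta>)) \<longrightarrow>
    (\<exists>d1 d2 d3 :: nat. d1 > 0 \<and> d2 > 0 \<and> d3 > 0 \<and> d = d1 * d2 * d3 \<and>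
       real d1 \<le> N / x powr \<delta> \<and>
       N^2 * real d2 * real d3 ^ 2 \<le> x powr (1 - \<delta>) \<and>
       N^2 * real d1 * real d2 ^ 4 * real d3 ^ 3 \<le> x powr (2 - \<delta>) \<and>
       N * real d1 * real d2 ^ 5 * real d3 ^ 2 \<le> x powr (2 - \<delta>))"
proof (rule exI[of _ "2::real"], intro allI impI)
  fix x N :: real and d :: nat
  assume x2: "2 \<le> x" and N1: "x powr (2*\<delta>) \<le> N" and N2: "N \<le> x powr (1/3 + \<delta>/2)"
    and dS: "d \<in> upper_sieve_support (x powr (7/12 - 50*\<delta>))"
  obtain ps where ps: "\<forall>p\<in>set ps. prime p" "sorted_wrt (\<ge>) ps" "d = prod_list ps"
    "\<forall>j. 2 * j < length ps \<longrightarrow>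
          real (prod_list (take (2 * j) ps)) * real (ps ! (2 * j)) ^ 3 \<le> x powr (7/12 - 50*\<delta>)"
    using dS unfolding upper_sieve_support_def by blast
  define r where "r = length ps"
  have x1: "1 < x" using x2 by simp
  have lx: "0 < ln x" using x1 by simp
  have "0 < x powr (2*\<delta>)" using x1 by simp
  then have Npos: "0 < N" using N1 by linarith
  define n where "n = ln N / ln x"
  have Nn: "N = x powr n" unfolding n_def using powr_log_eq[OF x1 Npos] by simp
  define e where "e i = ln (real (ps ! i)) / ln x" for i
  have ppos: "0 < ps ! i" if "i < r" for i
    using ps(1) that r_def nth_mem prime_gt_0_nat by blast
  have pe: "real (ps ! i) = x powr e i" if "i < r" for i
    unfolding e_def using powr_log_eq[OF x1] ppos[OF that] by simp
  have nonneg: "\<forall>i<r. 0 \<le> e i"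
  proof (intro allI impI)
    fix i assume "i < r"
    then have "1 \<le> real (ps ! i)" using ppos by (simp add: Suc_leI)
    then show "0 \<le> e i" unfolding e_def using lx by simp
  qed
  have sorted: "\<forall>i j. i \<le> j \<longrightarrow> j < r \<longrightarrow> e j \<le> e i"
  proof (intro allI impI)
    fix i j assume ij: "i \<le> j" "j < r"
    have "ps ! j \<le> ps ! i"
    proof (cases "i = j")
      case False
      then show ?thesis using sorted_wrt_nth_less[OF ps(2), of i j] ij r_def by simp
    qed simp
    then have "ln (real (ps ! j)) \<le> ln (real (ps ! i))" using ppos ij by simp
    then show "e j \<le> e i" unfolding e_def using lx by (simp add: divide_right_mono)
  qed
  have prodx: "(\<Prod>i\<in>I. real (ps ! i)) = x powr (sum e I)" if "I \<subseteq> {..<r}" for I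
  proof -
    have "(\<Prod>i\<in>I. real (ps ! i)) = (\<Prod>i\<in>I. x powr e i)" using pe that by (intro prod.cong) auto
    also have "\<dots> = x powr (sum e I)" using x1 by (simp add: powr_sum)
    finally show ?thesis .
  qed
  have cond: "\<forall>j. 2*j < r \<longrightarrow> (\<Sum>i<2*j. e i) + 3 * e (2*j) \<le> 7/12 - 50*\<delta>"
  proof (intro allI impI)
    fix j assume j: "2*j < r"
    have "real (prod_list (take (2 * j) ps)) = x powr (\<Sum>i<2*j. e i)"
      using prod_list_take_real[of "2*j" ps] prodx[of "{..<2*j}"] j r_def by simp
    moreover have "real (ps ! (2 * j)) ^ 3 = x powr (3 * e (2*j))"
      using pe[OF j] x1 by (simp add: powr_power)
    moreover have "real (prod_list (take (2 * j) ps)) * real (ps ! (2 * j)) ^ 3 \<le> x powr (7/12 - 50*\<delta>)"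
      using ps(4) j r_def by simp
    ultimately have "x powr (\<Sum>i<2*j. e i) * x powr (3 * e (2*j)) \<le> x powr (7/12 - 50*\<delta>)"
      by simp
    then have "x powr ((\<Sum>i<2*j. e i) + 3 * e (2*j)) \<le> x powr (7/12 - 50*\<delta>)"
      by (simp add: powr_add)
    then show "(\<Sum>i<2*j. e i) + 3 * e (2*j) \<le> 7/12 - 50*\<delta>" using x1 by simp
  qed
  have n1: "2*\<delta> \<le> n" using N1 Nn x1 by simp
  have n2: "n \<le> 1/3 + \<delta>/2" using N2 Nn x1 by simp
  obtain A B where AB: "A \<subseteq> {..<r}" "B \<subseteq> {..<r} - A" "sum e A \<le> n - \<delta>"
     "2*n + sum e B + 2 * sum e ({..<r} - A - B) \<le> 1 - \<delta>"
     "2*n + sum e A + 4*sum e B + 3*sum e ({..<r} - A - B) \<le> 2 - \<delta>"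
     "n + sum e A + 5*sum e B + 2*sum e ({..<r} - A - B) \<le> 2 - \<delta>"
    using core[OF assms n1 n2 nonneg sorted cond] by blast
  define C where "C = {..<r} - A - B"
  define d1 where "d1 = (\<Prod>i\<in>A. ps ! i)"
  define d2 where "d2 = (\<Prod>i\<in>B. ps ! i)"
  define d3 where "d3 = (\<Prod>i\<in>C. ps ! i)"
  have C: "C \<subseteq> {..<r}" unfolding C_def by auto
  have B: "B \<subseteq> {..<r}" using AB by auto
  have r1: "real d1 = x powr sum e A" unfolding d1_def using prodx[OF AB(1)] by simp
  have r2: "real d2 = x powr sum e B" unfolding d2_def using prodx[OF B] by simp
  have r3: "real d3 = x powr sum e C" unfolding d3_def using prodx[OF C] by simp
  have "0 < real d1" "0 < real d2" "0 < real d3" using r1 r2 r3 x1 by simp_all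
  then have pos: "0 < d1" "0 < d2" "0 < d3" by simp_all
  have dd: "d = d1 * d2 * d3"
  proof -
    have "d = (\<Prod>i<r. ps ! i)" using ps(3) r_def prod_list_take_real[of r ps]
      by (metis of_nat_eq_iff of_nat_prod order_refl take_all)
    also have "{..<r} = A \<union> B \<union> C" unfolding C_def using AB by auto
    also have "(\<Prod>i\<in>A \<union> B \<union> C. ps ! i) = d1 * d2 * d3"
    proof -
      have fA: "finite A" and fB: "finite B" and fC: "finite C"
        using AB(1) B C finite_subset by blast+
      have "(\<Prod>i\<in>A \<union> B \<union> C. ps ! i) = (\<Prod>i\<in>A \<union> B. ps ! i) * (\<Prod>i\<in>C. ps ! i)"
        using fA fB fC by (intro prod.union_disjoint) (auto simp: C_def)
      also have "(\<Prod>i\<in>A \<union> B. ps ! i) = (\<Prod>i\<in>A. ps ! i) * (\<Prod>i\<in>B. ps ! i)"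
        using fA fB AB(2) by (intro prod.union_disjoint) auto
      finally show ?thesis unfolding d1_def d2_def d3_def .
    qed
    finally show ?thesis .
  qed
  have c1: "real d1 \<le> N / x powr \<delta>"
    using r1 Nn AB(3) x1 by (simp add: powr_diff[symmetric])
  have c2: "N^2 * real d2 * real d3 ^ 2 \<le> x powr (1 - \<delta>)"
  proof -
    have "N^2 * real d2 * real d3 ^ 2 = x powr (2*n + sum e B + 2 * sum e C)"
      using Nn r2 r3 x1 by (simp add: powr_power powr_add mult_ac)
    then show ?thesis using AB(4) x1 C_def by simp
  qed
  have c3: "N^2 * real d1 * real d2 ^ 4 * real d3 ^ 3 \<le> x powr (2 - \<delta>)"
  proof -
    have "N^2 * real d1 * real d2 ^ 4 * real d3 ^ 3 = x powr (2*n + sum e A + 4*sum e B + 3 * sum e C)"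
      using Nn r1 r2 r3 x1 by (simp add: powr_power powr_add mult_ac)
    then show ?thesis using AB(5) x1 C_def by simp
  qed
  have c4: "N * real d1 * real d2 ^ 5 * real d3 ^ 2 \<le> x powr (2 - \<delta>)"
  proof -
    have "N * real d1 * real d2 ^ 5 * real d3 ^ 2 = x powr (n + sum e A + 5*sum e B + 2 * sum e C)"
      using Nn r1 r2 r3 x1 by (simp add: powr_power powr_add mult_ac)
    then show ?thesis using AB(6) x1 C_def by simp
  qed
  show "\<exists>d1 d2 d3 :: nat. d1 > 0 \<and> d2 > 0 \<and> d3 > 0 \<and> d = d1 * d2 * d3 \<and>
       real d1 \<le> N / x powr \<delta> \<and>
       N^2 * real d2 * real d3 ^ 2 \<le> x powr (1 - \<delta>) \<and>
       N^2 * real d1 * real d2 ^ 4 * real d3 ^ 3 \<le> x powr (2 - \<delta>) \<and>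
       N * real d1 * real d2 ^ 5 * real d3 ^ 2 \<le> x powr (2 - \<delta>)"
    using pos dd c1 c2 c3 c4 by blast
qed

end
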